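(* Suppose a TSP instance is formed by placing $n$ points independently and uniformly at random in the unit square $[0,1]^2$. Then the expected value of the ratio of the length of the worst (longest) local optimum of X-opt to the length of an optimal tour on this instance is $\Omega(\sqrt{n})$.
   Context: Euclidean TSP in the plane: given a finite set $X \subset \mathbb{R}^2$, a tour is a Hamiltonian cycle on $X$; edge $\{x,y\}$ has length equal to the Euclidean distance $d(x,y)$ and the length of a tour is the sum of its edge lengths. For an edge $e=\{x,y\}$, $L(e)$ denotes the closed line segment from $x$ to $y$. A tour is noncrossing if no two of its edges have intersecting line segments (other than at a shared endpoint). X-opt is the local search heuristic that repeatedly replaces two edges of the tour whose line segments intersect by two other edges so as to obtain a tour again; its local optima are exactly the noncrossing tours. *)

theory Defs
  imports "HOL-Probability.Probability"
begin

type_synonym point = "real \<times> real"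

definition is_tour :: "point set \<Rightarrow> point list \<Rightarrow> bool" where
  "is_tour X xs \<longleftrightarrow> distinct xs \<and> set xs = X \<and> length xs \<ge> 3"

definition tour_edge :: "point list \<Rightarrow> nat \<Rightarrow> point set" where
  "tour_edge xs i = {xs ! i, xs ! (Suc i mod length xs)}"

definition edge_seg :: "point list \<Rightarrow> nat \<Rightarrow> point set" where
  "edge_seg xs i = closed_segment (xs ! i) (xs ! (Suc i mod length xs))"

definition tour_length :: "point list \<Rightarrow> real" where
  "tour_length xs = (\<Sum>i<length xs. dist (xs ! i) (xs ! (Suc i mod length xs)))"

definition noncrossing :: "point list \<Rightarrow> bool" where
  "noncrossing xs \<longleftrightarrow>
     (\<forall>i<length xs. \<forall>j<length xs. i \<noteq> j \<longrightarrow>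
        edge_seg xs i \<inter> edge_seg xs j \<subseteq> tour_edge xs i \<inter> tour_edge xs j)"

definition opt_length :: "point set \<Rightarrow> real" where
  "opt_length X = Min (tour_length ` {xs. is_tour X xs})"

text \<open>Length of the worst (longest) local optimum of X-opt, i.e. of the longest
  noncrossing tour.\<close>
definition worst_xopt_length :: "point set \<Rightarrow> real" where
  "worst_xopt_length X = Max (tour_length ` {xs. is_tour X xs \<and> noncrossing xs})"

definition unit_square :: "point set" where
  "unit_square = cbox (0,0) (1,1)"

definition random_instance :: "nat \<Rightarrow> (nat \<Rightarrow> point) measure" where
  "random_instance n = PiM {..<n} (\<lambda>_. uniform_measure lborel unit_square)"

end

theory Submission
  imports Defs
begin

definition lexle :: "point \<Rightarrow> point \<Rightarrow> bool" where
  "lexle a b \<longleftrightarrow> fst a < fst b \<or> (fst a = fst b \<and> snd a \<le> snd b)"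

definition lexlt :: "point \<Rightarrow> point \<Rightarrow> bool" where
  "lexlt a b \<longleftrightarrow> lexle a b \<and> a \<noteq> b"

lemma lexle_refl: "lexle a a" by (simp add: lexle_def)
lemma lexle_trans: "lexle a b \<Longrightarrow> lexle b c \<Longrightarrow> lexle a c"
  by (auto simp: lexle_def)
lemma lexle_antisym: "lexle a b \<Longrightarrow> lexle b a \<Longrightarrow> a = b"
  by (cases a; cases b) (auto simp: lexle_def)
lemma lexle_total: "lexle a b \<or> lexle b a"
  by (auto simp: lexle_def)

lemma lex_min_exists:
  assumes "finite S" "S \<noteq> {}"
  shows "\<exists>m\<in>S. \<forall>z\<in>S. lexle m z"
proof -
  define mx where "mx = Min (fst ` S)"
  have mx: "mx \<in> fst ` S" "\<forall>z\<in>S. mx \<le> fst z"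
    using assms by (auto simp: mx_def)
  define T where "T = {z\<in>S. fst z = mx}"
  have T: "finite T" "T \<noteq> {}" using assms mx by (auto simp: T_def)
  define my where "my = Min (snd ` T)"
  have my: "my \<in> snd ` T" "\<forall>z\<in>T. my \<le> snd z"
    using T by (auto simp: my_def)
  obtain m where m: "m \<in> T" "snd m = my" using my by auto
  have "\<forall>z\<in>S. lexle m z"
  proof
    fix z assume z: "z \<in> S"
    show "lexle m z"
    proof (cases "fst z = mx")
      case True
      then have "z \<in> T" using z by (simp add: T_def)
      then show ?thesis using my m True by (auto simp: lexle_def T_def)
    next
      case False
      then show ?thesis using mx z m by (force simp: lexle_def T_def)
    qed
  qed
  then show ?thesis using m by (auto simp: T_def)
qed

lemma lex_max_exists:
  assumes "finite S" "S \<noteq> {}"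
  shows "\<exists>m\<in>S. \<forall>z\<in>S. lexle z m"
proof -
  have "finite ((\<lambda>z. - z) ` S)" "(\<lambda>z. - z) ` S \<noteq> {}" using assms by auto
  from lex_min_exists[OF this] obtain m where "m \<in> (\<lambda>z. - z) ` S" "\<forall>z\<in>(\<lambda>z. - z) ` S. lexle m z"
    by blast
  then show ?thesis
    by (force simp: lexle_def)
qed

lemma sorted_exists:
  "finite S \<Longrightarrow> \<exists>zs. set zs = S \<and> distinct zs \<and> sorted_wrt lexlt zs"
proof (induction "card S" arbitrary: S)
  case 0
  then show ?case by (intro exI[of _ "[]"]) auto
next
  case (Suc k)
  then have "S \<noteq> {}" by auto
  from lex_min_exists[OF Suc.prems this] obtain m where m: "m \<in> S" "\<forall>z\<in>S. lexle m z" by blast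
  have "k = card (S - {m})" using Suc.hyps(2) m(1) Suc.prems by simp
  from Suc.hyps(1)[OF this] Suc.prems obtain zs where
    zs: "set zs = S - {m}" "distinct zs" "sorted_wrt lexlt zs" by auto
  show ?case
    by (intro exI[of _ "m # zs"]) (use zs m in \<open>auto simp: lexlt_def\<close>)
qed

lemma in_segment_lex:
  assumes "z \<in> closed_segment a b" "lexle a b"
  shows "lexle a z \<and> lexle z b"
proof -
  obtain u where u: "0 \<le> u" "u \<le> 1" "z = (1-u) *\<^sub>R a + u *\<^sub>R b"
    using assms(1) by (auto simp: closed_segment_def)
  have fz: "fst z = (1-u) * fst a + u * fst b" and sz: "snd z = (1-u) * snd a + u * snd b"
    using u(3) by auto
  show ?thesis
  proof (cases "fst a < fst b")
    case True
    show ?thesis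
    proof (cases "u = 0")
      case True then show ?thesis using u assms(2) by (simp add: lexle_refl)
    next
      case u0: False
      show ?thesis
      proof (cases "u = 1")
        case True then show ?thesis using u assms(2) by (simp add: lexle_refl)
      next
        case False
        have "u > 0" "u < 1" using u u0 False by auto
        have e1: "fst z - fst a = u*(fst b - fst a)" "fst b - fst z = (1-u)*(fst b - fst a)"
          unfolding fz by (simp_all add: algebra_simps)
        have p1: "u*(fst b - fst a) > 0" "(1-u)*(fst b - fst a) > 0"
          using \<open>u > 0\<close> \<open>u < 1\<close> \<open>fst a < fst b\<close> by simp_all
        have "0 < fst z - fst a" "0 < fst b - fst z" unfolding e1 using p1 by simp_all
        then have "fst a < fst z" "fst z < fst b" by simp_all
        then show ?thesis by (simp add: lexle_def)
      qed
    qed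
  next
    case False
    then have e: "fst a = fst b" "snd a \<le> snd b" using assms(2) by (auto simp: lexle_def)
    then have "fst z = fst a" unfolding fz by (simp add: algebra_simps)
    moreover have q: "snd z - snd a = u*(snd b - snd a)" "snd b - snd z = (1-u)*(snd b - snd a)"
      unfolding sz by (simp_all add: algebra_simps)
    have "0 \<le> snd z - snd a" "0 \<le> snd b - snd z" unfolding q using e u by simp_all
    then have "snd a \<le> snd z" "snd z \<le> snd b" by simp_all
    ultimately show ?thesis using e \<open>fst z = fst a\<close> by (simp add: lexle_def)
  qed
qed

lemma in_segment_lex':
  assumes "z \<in> closed_segment a b"
  shows "(lexle a z \<and> lexle z b) \<or> (lexle b z \<and> lexle z a)"
  using in_segment_lex[OF assms] in_segment_lex[of z b a] assms lexle_total[of a b]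
  by (auto simp: closed_segment_commute)

definition side :: "point \<Rightarrow> point \<Rightarrow> point \<Rightarrow> real" where
  "side P Q z = (fst Q - fst P)*(snd z - snd P) - (snd Q - snd P)*(fst z - fst P)"

lemma side_comb: "side P Q ((1-u) *\<^sub>R a + u *\<^sub>R b) = (1-u) * side P Q a + u * side P Q b"
  by (simp add: side_def algebra_simps)

lemma side_PQ[simp]: "side P Q P = 0" "side P Q Q = 0"
  by (simp_all add: side_def)

lemma lexlt_imp_le: "lexlt a b \<Longrightarrow> lexle a b" by (simp add: lexlt_def)

lemma chain_inc:
  assumes "sorted_wrt lexlt zs" "i < j" "Suc j < length zs"
  shows "closed_segment (zs!i) (zs!Suc i) \<inter> closed_segment (zs!j) (zs!Suc j)
         \<subseteq> {zs!i, zs!Suc i} \<inter> {zs!j, zs!Suc j}"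
proof
  fix z assume z: "z \<in> closed_segment (zs!i) (zs!Suc i) \<inter> closed_segment (zs!j) (zs!Suc j)"
  have l1: "lexle (zs!i) (zs!Suc i)" "lexle (zs!j) (zs!Suc j)"
    using assms sorted_wrt_nth_less[OF assms(1)] by (auto intro: lexlt_imp_le)
  have a: "lexle z (zs!Suc i)" using in_segment_lex[OF _ l1(1)] z by auto
  have b: "lexle (zs!j) z" using in_segment_lex[OF _ l1(2)] z by auto
  have c: "lexle (zs!Suc i) (zs!j)"
  proof (cases "Suc i = j")
    case True then show ?thesis by (simp add: lexle_refl)
  next
    case False then show ?thesis
      using assms sorted_wrt_nth_less[OF assms(1), of "Suc i" j] by (auto intro: lexlt_imp_le)
  qed
  have "z = zs!Suc i" using a b c lexle_antisym lexle_trans by blast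
  moreover have "z = zs!j" using a b c lexle_antisym lexle_trans by blast
  ultimately show "z \<in> {zs!i, zs!Suc i} \<inter> {zs!j, zs!Suc j}" by simp
qed

lemma chain_dec:
  assumes "sorted_wrt (\<lambda>a b. lexlt b a) zs" "i < j" "Suc j < length zs"
  shows "closed_segment (zs!i) (zs!Suc i) \<inter> closed_segment (zs!j) (zs!Suc j)
         \<subseteq> {zs!i, zs!Suc i} \<inter> {zs!j, zs!Suc j}"
proof
  fix z assume z: "z \<in> closed_segment (zs!i) (zs!Suc i) \<inter> closed_segment (zs!j) (zs!Suc j)"
  have l1: "lexle (zs!Suc i) (zs!i)" "lexle (zs!Suc j) (zs!j)"
    using assms sorted_wrt_nth_less[OF assms(1)] by (auto intro: lexlt_imp_le)
  have a: "lexle (zs!Suc i) z" using in_segment_lex[OF _ l1(1)] z by (auto simp: closed_segment_commute)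
  have b: "lexle z (zs!j)" using in_segment_lex[OF _ l1(2)] z by (auto simp: closed_segment_commute)
  have c: "lexle (zs!j) (zs!Suc i)"
  proof (cases "Suc i = j")
    case True then show ?thesis by (simp add: lexle_refl)
  next
    case False then show ?thesis
      using assms sorted_wrt_nth_less[OF assms(1), of "Suc i" j] by (auto intro: lexlt_imp_le)
  qed
  have "z = zs!Suc i" using a b c lexle_antisym lexle_trans by blast
  moreover have "z = zs!j" using a b c lexle_antisym lexle_trans by blast
  ultimately show "z \<in> {zs!i, zs!Suc i} \<inter> {zs!j, zs!Suc j}" by simp
qed

lemma chain:
  assumes "sorted_wrt lexlt zs \<or> sorted_wrt (\<lambda>a b. lexlt b a) zs" "i \<noteq> j"
    "Suc i < length zs" "Suc j < length zs"
  shows "closed_segment (zs!i) (zs!Suc i) \<inter> closed_segment (zs!j) (zs!Suc j)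
         \<subseteq> {zs!i, zs!Suc i} \<inter> {zs!j, zs!Suc j}"
proof (cases "i < j")
  case True then show ?thesis using assms chain_inc chain_dec by blast
next
  case False
  then have "j < i" using assms by simp
  then have "closed_segment (zs!j) (zs!Suc j) \<inter> closed_segment (zs!i) (zs!Suc i)
         \<subseteq> {zs!j, zs!Suc j} \<inter> {zs!i, zs!Suc i}" using assms chain_inc chain_dec by blast
  then show ?thesis by blast
qed

lemma sep:
  assumes X: "\<forall>w\<in>X. lexle P w" "\<forall>w\<in>X. lexle w Q" "P \<in> X" "Q \<in> X"
    and cd: "c \<in> X" "d \<in> X" "side P Q c \<ge> 0" "side P Q d \<ge> 0"
    and ab: "side P Q a < 0 \<or> a \<in> {P,Q}" "side P Q b < 0 \<or> b \<in> {P,Q}"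
      "side P Q a < 0 \<or> side P Q b < 0"
    and z: "z \<in> closed_segment a b" "z \<in> closed_segment c d"
  shows "z \<in> {a,b} \<inter> {c,d}"
proof -
  have sa: "side P Q a \<le> 0" "side P Q b \<le> 0" using ab by auto
  obtain u where u: "0 \<le> u" "u \<le> 1" "z = (1-u) *\<^sub>R a + u *\<^sub>R b"
    using z(1) by (auto simp: closed_segment_def)
  obtain v where v: "0 \<le> v" "v \<le> 1" "z = (1-v) *\<^sub>R c + v *\<^sub>R d"
    using z(2) by (auto simp: closed_segment_def)
  have e1: "side P Q z = (1-u) * side P Q a + u * side P Q b" using u(3) side_comb by simp
  have e2: "side P Q z = (1-v) * side P Q c + v * side P Q d" using v(3) side_comb by simp
  have t1: "(1-u) * side P Q a \<le> 0" "u * side P Q b \<le> 0"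
    using u sa by (simp_all add: mult_nonneg_nonpos)
  have t2: "(1-v) * side P Q c \<ge> 0" "v * side P Q d \<ge> 0"
    using v cd by simp_all
  have z0: "side P Q z = 0" using e1 e2 t1 t2 by linarith
  have zab: "z \<in> {a,b} \<and> z \<in> {P,Q}"
  proof (cases "side P Q a < 0")
    case True
    have "(1-u) * side P Q a = 0" using z0 e1 t1 by linarith
    then have "u = 1" using True by simp
    then have "z = b" using u by simp
    moreover have "side P Q b = 0" using z0 \<open>u = 1\<close> e1 by simp
    ultimately show ?thesis using ab by auto
  next
    case False
    then have sb: "side P Q b < 0" using ab by auto
    have "u * side P Q b = 0" using z0 e1 t1 by linarith
    then have "u = 0" using sb by simp
    then have "z = a" using u by simp
    moreover have "side P Q a = 0" using z0 \<open>u = 0\<close> e1 by simp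
    ultimately show ?thesis using ab by auto
  qed
  have "z \<in> {c,d}"
    using zab in_segment_lex'[OF z(2)] X cd lexle_antisym by blast
  then show ?thesis using zab by blast
qed

lemma tour_construct:
  assumes X: "finite X" "P\<in>X" "Q\<in>X" "P\<noteq>Q" "\<forall>w\<in>X. lexle P w" "\<forall>w\<in>X. lexle w Q"
    and ds: "set ds = {w\<in>X. side P Q w < 0}" "distinct ds" "sorted_wrt lexlt ds" "ds \<noteq> []"
  shows "\<exists>xs. is_tour X xs \<and> noncrossing xs \<and>
           (\<Sum>t<length ds - 1. dist (ds!t) (ds!Suc t)) \<le> tour_length xs"
proof -
  obtain us where us: "set us = X - set ds - {P,Q}" "distinct us" "sorted_wrt lexlt us"
    using sorted_exists[of "X - set ds - {P,Q}"] X(1) by auto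
  define xs where "xs = (P # ds) @ (Q # rev us)"
  define C1 where "C1 = (P # ds) @ [Q]"
  define C2 where "C2 = (Q # rev us) @ [P]"
  define m where "m = length ds"
  define r where "r = length us"
  have len: "length xs = m + r + 2" by (simp add: xs_def m_def r_def)
  have PQds: "P \<notin> set ds" "Q \<notin> set ds" using ds(1) by auto
  have dsX: "set ds \<subseteq> X" using ds(1) by auto
  have setxs: "set xs = X" unfolding xs_def using us(1) dsX X(2,3) by auto
  have dus: "P \<notin> set us" "Q \<notin> set us" "set ds \<inter> set us = {}" using us(1) by auto
  have dxs: "distinct xs" unfolding xs_def using us(2) ds(2) X(4) PQds dus by auto
  have m0: "m \<ge> 1" using ds(4) by (cases ds) (auto simp: m_def)
  have tour: "is_tour X xs" using setxs dxs len m0 by (simp add: is_tour_def)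
  have Pds: "\<forall>w\<in>set ds. lexlt P w" "\<forall>w\<in>set ds. lexlt w Q"
    using X(5,6) dsX PQds unfolding lexlt_def by blast+
  have Pus: "\<forall>w\<in>set us. lexlt P w" "\<forall>w\<in>set us. lexlt w Q"
    using X(5,6) us(1) dus unfolding lexlt_def by blast+
  have PQ: "lexlt P Q" using X(3,4,5) unfolding lexlt_def by blast
  have sC1: "sorted_wrt lexlt C1"
    unfolding C1_def sorted_wrt_append using ds(3) Pds PQ by simp
  have "sorted_wrt lexlt ((P # us) @ [Q])"
    unfolding sorted_wrt_append using us(3) Pus PQ by simp
  have sC2: "sorted_wrt (\<lambda>a b. lexlt b a) C2"
  proof -
    have "C2 = rev ((P # us) @ [Q])" by (simp add: C2_def)
    then show ?thesis using \<open>sorted_wrt lexlt ((P # us) @ [Q])\<close> by (simp only: sorted_wrt_rev)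
  qed
  have lC1: "length C1 = m + 2" and lC2: "length C2 = r + 2"
    by (simp_all add: C1_def C2_def m_def r_def)
  define A where "A = P # ds"
  define B where "B = Q # rev us"
  have xsAB: "xs = A @ B" and C1A: "C1 = A @ [Q]" and C2B: "C2 = B @ [P]"
    by (simp_all add: xs_def C1_def C2_def A_def B_def)
  have lA: "length A = Suc m" and lB: "length B = Suc r" and B0: "B!0 = Q"
    by (simp_all add: A_def B_def m_def r_def)
  have E1: "xs!i = C1!i \<and> xs!(Suc i mod length xs) = C1!Suc i" if "i \<le> m" for i
  proof -
    have "Suc i mod length xs = Suc i" using that len by simp
    moreover have "xs!i = C1!i" using that lA
      by (simp add: xsAB C1A nth_append)
    moreover have "xs!Suc i = C1!Suc i"
    proof (cases "Suc i = Suc m")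
      case True then show ?thesis using lA B0 by (simp add: xsAB C1A nth_append)
    next
      case False then show ?thesis using that lA by (simp add: xsAB C1A nth_append)
    qed
    ultimately show ?thesis by simp
  qed
  have E2: "xs!i = C2!(i - Suc m) \<and> xs!(Suc i mod length xs) = C2!(i - m)"
    if "m < i" "i < length xs" for i
  proof -
    have ir: "i - Suc m < Suc r" "\<not> i < Suc m" using that len by linarith+
    have "xs!i = C2!(i - Suc m)" using ir lA lB
      by (simp add: xsAB C2B nth_append)
    moreover have "xs!(Suc i mod length xs) = C2!(i - m)"
    proof (cases "Suc i = length xs")
      case True
      then have "i - m = Suc r" using len by simp
      moreover have "xs!0 = P" by (simp add: xs_def)
      ultimately show ?thesis using True lB by (simp add: C2B nth_append)
    next
      case False
      then have "Suc i < length xs" using that by simp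
      then have "Suc i mod length xs = Suc i" by simp
      moreover have "i - m = Suc i - Suc m" using that by simp
      moreover have "Suc i - Suc m < Suc r" "\<not> Suc i < Suc m" using that len \<open>Suc i < length xs\<close> by linarith+
      ultimately show ?thesis using lA lB
        by (simp add: xsAB C2B nth_append)
    qed
    ultimately show ?thesis by simp
  qed
  have C1side: "side P Q (C1!k) < 0 \<or> C1!k \<in> {P,Q}" if "k < m + 2" for k
  proof -
    have "C1!k \<in> set C1" using that lC1 by simp
    then show ?thesis using ds(1) by (auto simp: C1_def)
  qed
  have C1X: "C1!k \<in> X" if "k < m + 2" for k
  proof -
    have "C1!k \<in> set C1" using that lC1 by simp
    then show ?thesis using ds(1) X by (auto simp: C1_def)
  qed
  have C1one: "side P Q (C1!k) < 0 \<or> side P Q (C1!Suc k) < 0" if "k \<le> m" for k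
  proof (cases "k = 0")
    case True
    then have "C1!Suc k = ds!0" using m0 ds(4) by (simp add: C1_def nth_append nth_Cons' m_def)
    moreover have "ds!0 \<in> set ds" using ds(4) by simp
    ultimately show ?thesis using ds(1) by auto
  next
    case False
    have "k - 1 < length ds" using that False by (simp add: m_def)
    then have "C1!k = ds!(k-1)" using False by (simp add: C1_def nth_append nth_Cons')
    moreover have "ds!(k-1) \<in> set ds" using that False by (simp add: m_def)
    ultimately show ?thesis using ds(1) by auto
  qed
  have C2side: "C2!k \<in> X \<and> side P Q (C2!k) \<ge> 0" if "k < r + 2" for k
  proof -
    have "C2!k \<in> set C2" using that lC2 by simp
    then show ?thesis using ds(1) us(1) X by (auto simp: C2_def)
  qed
  have mixed: "closed_segment (C1!i) (C1!Suc i) \<inter> closed_segment (C2!k) (C2!Suc k)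
          \<subseteq> {C1!i, C1!Suc i} \<inter> {C2!k, C2!Suc k}" if "i \<le> m" "k \<le> r" for i k
  proof
    fix z assume z: "z \<in> closed_segment (C1!i) (C1!Suc i) \<inter> closed_segment (C2!k) (C2!Suc k)"
    have c1: "C2!k \<in> X" "side P Q (C2!k) \<ge> 0" using C2side[of k] that by auto
    have c2: "C2!Suc k \<in> X" "side P Q (C2!Suc k) \<ge> 0" using C2side[of "Suc k"] that by auto
    have a1: "side P Q (C1!i) < 0 \<or> C1!i \<in> {P,Q}" using C1side[of i] that by auto
    have a2: "side P Q (C1!Suc i) < 0 \<or> C1!Suc i \<in> {P,Q}" using C1side[of "Suc i"] that by auto
    have a3: "side P Q (C1!i) < 0 \<or> side P Q (C1!Suc i) < 0" using C1one[OF that(1)] .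
    have z1: "z \<in> closed_segment (C1!i) (C1!Suc i)" and z2: "z \<in> closed_segment (C2!k) (C2!Suc k)"
      using z by auto
    show "z \<in> {C1!i, C1!Suc i} \<inter> {C2!k, C2!Suc k}"
      by (rule sep[OF X(5,6,2,3) c1(1) c2(1) c1(2) c2(2) a1 a2 a3 z1 z2])
  qed
  have nc: "noncrossing xs"
    unfolding noncrossing_def edge_seg_def tour_edge_def
  proof (intro allI impI)
    fix i j assume ij: "i < length xs" "j < length xs" "i \<noteq> j"
    show "closed_segment (xs!i) (xs!(Suc i mod length xs)) \<inter> closed_segment (xs!j) (xs!(Suc j mod length xs))
          \<subseteq> {xs!i, xs!(Suc i mod length xs)} \<inter> {xs!j, xs!(Suc j mod length xs)}"
    proof (cases "i \<le> m")
      case i1: True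
      have ei: "xs!i = C1!i" "xs!(Suc i mod length xs) = C1!Suc i" using E1[OF i1] by auto
      show ?thesis
      proof (cases "j \<le> m")
        case j1: True
        have ej: "xs!j = C1!j" "xs!(Suc j mod length xs) = C1!Suc j" using E1[OF j1] by auto
        have "Suc i < length C1" "Suc j < length C1" using i1 j1 lC1 by simp_all
        then show ?thesis unfolding ei ej
          by (intro chain) (use sC1 ij(3) in auto)
      next
        case False
        then have j2: "m < j" by simp
        have k: "j - Suc m \<le> r" "Suc (j - Suc m) = j - m" using ij len j2 by simp_all
        have ej: "xs!j = C2!(j - Suc m)" "xs!(Suc j mod length xs) = C2!Suc (j - Suc m)"
          using E2[OF j2 ij(2)] k(2) by auto
        show ?thesis unfolding ei ej by (rule mixed[OF i1 k(1)])
      qed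
    next
      case False
      then have i2: "m < i" by simp
      have k: "i - Suc m \<le> r" "Suc (i - Suc m) = i - m" using ij len i2 by simp_all
      have ei: "xs!i = C2!(i - Suc m)" "xs!(Suc i mod length xs) = C2!Suc (i - Suc m)"
        using E2[OF i2 ij(1)] k(2) by auto
      show ?thesis
      proof (cases "j \<le> m")
        case j1: True
        have ej: "xs!j = C1!j" "xs!(Suc j mod length xs) = C1!Suc j" using E1[OF j1] by auto
        have "closed_segment (C1!j) (C1!Suc j) \<inter> closed_segment (C2!(i - Suc m)) (C2!Suc (i - Suc m))
          \<subseteq> {C1!j, C1!Suc j} \<inter> {C2!(i - Suc m), C2!Suc (i - Suc m)}"
          by (rule mixed[OF j1 k(1)])
        then show ?thesis unfolding ei ej by (simp only: Int_commute)
      next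
        case False
        then have j2: "m < j" by simp
        have k2: "j - Suc m \<le> r" "Suc (j - Suc m) = j - m" using ij len j2 by simp_all
        have ej: "xs!j = C2!(j - Suc m)" "xs!(Suc j mod length xs) = C2!Suc (j - Suc m)"
          using E2[OF j2 ij(2)] k2(2) by auto
        have "i - Suc m \<noteq> j - Suc m" using i2 j2 ij by simp
        moreover have "Suc (i - Suc m) < length C2" "Suc (j - Suc m) < length C2"
          using k(1) k2(1) lC2 by simp_all
        ultimately show ?thesis unfolding ei ej
          by (intro chain) (use sC2 in auto)
      qed
    qed
  qed
  define f where "f i = dist (xs!i) (xs!(Suc i mod length xs))" for i
  have "(\<Sum>t<m - 1. dist (ds!t) (ds!Suc t)) = (\<Sum>t<m - 1. f (Suc t))"
  proof (rule sum.cong)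
    fix t assume "t \<in> {..<m - 1}"
    then have t: "Suc t < m" by simp
    then have "Suc (Suc t) mod length xs = Suc (Suc t)" using len by simp
    then show "dist (ds!t) (ds!Suc t) = f (Suc t)" using t
      by (simp add: f_def xs_def nth_append nth_Cons' m_def)
  qed simp
  also have "\<dots> = (\<Sum>i\<in>Suc ` {..<m - 1}. f i)"
    by (simp add: sum.reindex)
  also have "\<dots> \<le> (\<Sum>i<length xs. f i)"
    by (rule sum_mono2) (auto simp: f_def len)
  also have "\<dots> = tour_length xs" by (simp add: tour_length_def f_def)
  finally show ?thesis using tour nc by (auto simp: m_def)
qed

lemma path_dist:
  assumes "l \<le> h" "h < length zs"
  shows "dist (zs!l) (zs!h) \<le> (\<Sum>t\<in>{l..<h}. dist (zs!t) (zs!Suc t))"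
  using assms
proof (induction h rule: dec_induct)
  case base then show ?case by simp
next
  case (step n)
  have "dist (zs!l) (zs!Suc n) \<le> dist (zs!l) (zs!n) + dist (zs!n) (zs!Suc n)"
    by (rule dist_triangle)
  also have "\<dots> \<le> (\<Sum>t\<in>{l..<n}. dist (zs!t) (zs!Suc t)) + dist (zs!n) (zs!Suc n)"
    using step by simp
  also have "\<dots> = (\<Sum>t\<in>{l..<Suc n}. dist (zs!t) (zs!Suc t))"
    using step(1) by simp
  finally show ?case .
qed

lemma lexle_fst: "lexle a b \<Longrightarrow> fst a \<le> fst b"
  by (auto simp: lexle_def)

lemma sorted_lexle:
  assumes "sorted_wrt lexlt zs" "i \<le> j" "j < length zs"
  shows "lexle (zs!i) (zs!j)"
proof (cases "i = j")
  case True then show ?thesis by (simp add: lexle_refl)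
next
  case False then show ?thesis using assms sorted_wrt_nth_less[OF assms(1), of i j]
    by (simp add: lexlt_def)
qed

lemma columns:
  fixes ds :: "point list" and K :: "nat set" and a b :: "nat \<Rightarrow> point" and lo hi :: "nat \<Rightarrow> real"
  assumes srt: "sorted_wrt lexlt ds" and fin: "finite K"
    and ab: "\<forall>k\<in>K. a k \<in> set ds \<and> b k \<in> set ds \<and> lo k \<le> fst (a k) \<and> fst (a k) \<le> hi k \<and>
                 lo k \<le> fst (b k) \<and> fst (b k) \<le> hi k \<and> \<delta> \<le> dist (a k) (b k)"
    and disj: "\<forall>k\<in>K. \<forall>k'\<in>K. k \<noteq> k' \<longrightarrow> {lo k..hi k} \<inter> {lo k'..hi k'} = {}"
  shows "\<delta> * card K \<le> (\<Sum>t<length ds - 1. dist (ds!t) (ds!Suc t))"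
proof -
  define ia where "ia k = (SOME i. i < length ds \<and> ds!i = a k)" for k
  define ib where "ib k = (SOME i. i < length ds \<and> ds!i = b k)" for k
  have ia: "ia k < length ds \<and> ds!(ia k) = a k" if "k \<in> K" for k
  proof -
    have "\<exists>i. i < length ds \<and> ds!i = a k" using ab that by (auto simp: in_set_conv_nth)
    then show ?thesis unfolding ia_def by (rule someI_ex)
  qed
  have ib: "ib k < length ds \<and> ds!(ib k) = b k" if "k \<in> K" for k
  proof -
    have "\<exists>i. i < length ds \<and> ds!i = b k" using ab that by (auto simp: in_set_conv_nth)
    then show ?thesis unfolding ib_def by (rule someI_ex)
  qed
  define l where "l k = min (ia k) (ib k)" for k
  define h where "h k = max (ia k) (ib k)" for k
  define R where "R k = {l k..<h k}" for k
  define f where "f t = dist (ds!t) (ds!Suc t)" for t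
  have lh: "l k \<le> h k" "h k < length ds" if "k \<in> K" for k
    using ia[OF that] ib[OF that] by (auto simp: l_def h_def)
  have ends: "{ds!(l k), ds!(h k)} \<subseteq> {a k, b k}" if "k \<in> K" for k
    using ia[OF that] ib[OF that] by (auto simp: l_def h_def min_def max_def)
  have dR: "\<delta> \<le> sum f (R k)" if "k \<in> K" for k
  proof -
    have "dist (ds!(l k)) (ds!(h k)) = dist (a k) (b k)"
      using ia[OF that] ib[OF that] by (auto simp: l_def h_def min_def max_def dist_commute)
    moreover have "\<delta> \<le> dist (a k) (b k)" using ab that by blast
    ultimately show ?thesis using path_dist[OF lh[OF that]] by (simp add: R_def f_def)
  qed
  have inR: "lo k \<le> fst (ds!t) \<and> fst (ds!t) \<le> hi k" if "k \<in> K" "t \<in> R k" for k t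
  proof -
    have t: "l k \<le> t" "t < h k" using that(2) by (auto simp: R_def)
    have "fst (ds!(l k)) \<le> fst (ds!t)"
      using sorted_lexle[OF srt t(1)] t lh[OF that(1)] lexle_fst by simp
    moreover have "fst (ds!t) \<le> fst (ds!(h k))"
      using sorted_lexle[OF srt, of t "h k"] t lh[OF that(1)] lexle_fst by simp
    moreover have "lo k \<le> fst (ds!(l k))" "fst (ds!(h k)) \<le> hi k"
      using ends[OF that(1)] ab that(1) by auto
    ultimately show ?thesis by linarith
  qed
  have Rsub: "R k \<subseteq> {..<length ds - 1}" if "k \<in> K" for k
    using lh[OF that] by (auto simp: R_def)
  have Rdisj: "R k \<inter> R k' = {}" if "k \<in> K" "k' \<in> K" "k \<noteq> k'" for k k'
  proof (rule ccontr)
    assume "R k \<inter> R k' \<noteq> {}"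
    then obtain t where "t \<in> R k" "t \<in> R k'" by blast
    then have "fst (ds!t) \<in> {lo k..hi k} \<inter> {lo k'..hi k'}" using inR that by auto
    then show False using disj that by blast
  qed
  have "\<delta> * card K = (\<Sum>k\<in>K. \<delta>)" by simp
  also have "\<dots> \<le> (\<Sum>k\<in>K. sum f (R k))" by (rule sum_mono) (use dR in auto)
  also have "\<dots> = sum f (\<Union>k\<in>K. R k)"
    by (rule sum.UNION_disjoint[symmetric]) (use fin Rdisj in \<open>auto simp: R_def\<close>)
  also have "\<dots> \<le> sum f {..<length ds - 1}"
    by (rule sum_mono2) (use Rsub in \<open>auto simp: f_def\<close>)
  finally show ?thesis by (simp add: f_def)
qed

lemma finite_tours: "finite X \<Longrightarrow> finite {xs. is_tour X xs \<and> Pr xs}"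
proof -
  assume X: "finite X"
  have "{xs. is_tour X xs \<and> Pr xs} \<subseteq> {xs. set xs \<subseteq> X \<and> length xs \<le> card X}"
    by (auto simp: is_tour_def distinct_card[symmetric])
  moreover have "finite {xs. set xs \<subseteq> X \<and> length xs \<le> card X}"
    by (rule finite_lists_length_le[OF X])
  ultimately show ?thesis by (rule finite_subset)
qed

lemma worst_ge:
  fixes K :: "nat set" and a b :: "nat \<Rightarrow> point"
  assumes X: "finite X" "P\<in>X" "Q\<in>X" "P\<noteq>Q" "\<forall>w\<in>X. lexle P w" "\<forall>w\<in>X. lexle w Q"
    and K: "finite K" "K \<noteq> {}"
    and ab: "\<forall>k\<in>K. a k \<in> X \<and> side P Q (a k) < 0 \<and> b k \<in> X \<and> side P Q (b k) < 0 \<and>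
                 lo k \<le> fst (a k) \<and> fst (a k) \<le> hi k \<and>
                 lo k \<le> fst (b k) \<and> fst (b k) \<le> hi k \<and> \<delta> \<le> dist (a k) (b k)"
    and disj: "\<forall>k\<in>K. \<forall>k'\<in>K. k \<noteq> k' \<longrightarrow> {lo k..hi k} \<inter> {lo k'..hi k'} = {}"
  shows "\<delta> * card K \<le> worst_xopt_length X"
proof -
  obtain ds where ds: "set ds = {w\<in>X. side P Q w < 0}" "distinct ds" "sorted_wrt lexlt ds"
    using sorted_exists[of "{w\<in>X. side P Q w < 0}"] X(1) by auto
  obtain k0 where "k0 \<in> K" using K by auto
  then have "a k0 \<in> set ds" using ab ds(1) by auto
  then have "ds \<noteq> []" by auto
  from tour_construct[OF X ds this] obtain xs where
    xs: "is_tour X xs" "noncrossing xs" "(\<Sum>t<length ds - 1. dist (ds!t) (ds!Suc t)) \<le> tour_length xs"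
    by blast
  have "\<delta> * card K \<le> (\<Sum>t<length ds - 1. dist (ds!t) (ds!Suc t))"
  proof (rule columns[where a=a and b=b and lo=lo and hi=hi])
    show "\<forall>k\<in>K. a k \<in> set ds \<and> b k \<in> set ds \<and> lo k \<le> fst (a k) \<and> fst (a k) \<le> hi k \<and>
                 lo k \<le> fst (b k) \<and> fst (b k) \<le> hi k \<and> \<delta> \<le> dist (a k) (b k)"
      using ab ds(1) by auto
  qed (use ds(3) K(1) disj in auto)
  also have "\<dots> \<le> tour_length xs" by (rule xs(3))
  also have "\<dots> \<le> worst_xopt_length X"
    unfolding worst_xopt_length_def
    by (rule Max_ge) (use finite_tours[OF X(1)] xs in auto)
  finally show ?thesis .
qed

lemma finite_tours': "finite X \<Longrightarrow> finite {xs. is_tour X xs}"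
  using finite_tours[of X "\<lambda>_. True"] by simp

lemma in_unit_square: "z \<in> unit_square \<longleftrightarrow> 0 \<le> fst z \<and> fst z \<le> 1 \<and> 0 \<le> snd z \<and> snd z \<le> 1"
  by (cases z) (simp add: unit_square_def cbox_Pair_eq)

lemma dist_le_abs: "dist a b \<le> \<bar>fst a - fst b\<bar> + \<bar>snd a - snd b\<bar>"
proof -
  have "dist a b = sqrt ((fst a - fst b)\<^sup>2 + (snd a - snd b)\<^sup>2)"
    by (cases a; cases b) (simp add: dist_Pair_Pair dist_real_def)
  also have "\<dots> \<le> \<bar>fst a - fst b\<bar> + \<bar>snd a - snd b\<bar>" by (rule sqrt_sum_squares_le_sum_abs)
  finally show ?thesis .
qed

lemma dist_le_2:
  assumes "a \<in> unit_square" "b \<in> unit_square"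
  shows "dist a b \<le> 2"
proof -
  have "\<bar>fst a - fst b\<bar> \<le> 1" "\<bar>snd a - snd b\<bar> \<le> 1"
    using assms unfolding in_unit_square abs_le_iff by auto
  then show ?thesis using dist_le_abs[of a b] by linarith
qed

definition skey :: "nat \<Rightarrow> point \<Rightarrow> real" where
  "skey k z = 3 * of_int \<lfloor>real k * snd z\<rfloor> + fst z"

lemma edge_bound:
  assumes k: "k \<ge> 1" and a: "a \<in> unit_square" and b: "b \<in> unit_square"
    and le: "skey k a \<le> skey k b"
  shows "dist a b \<le> skey k b - skey k a + 1 / real k"
proof -
  define sa where "sa = \<lfloor>real k * snd a\<rfloor>"
  define sb where "sb = \<lfloor>real k * snd b\<rfloor>"
  have ua: "0 \<le> fst a" "fst a \<le> 1" "0 \<le> snd a" "snd a \<le> 1" using a by (auto simp: in_unit_square)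
  have ub: "0 \<le> fst b" "fst b \<le> 1" "0 \<le> snd b" "snd b \<le> 1" using b by (auto simp: in_unit_square)
  have d: "dist a b \<le> \<bar>fst a - fst b\<bar> + \<bar>snd a - snd b\<bar>" by (rule dist_le_abs)
  have fa: "skey k a = 3 * of_int sa + fst a" and fb: "skey k b = 3 * of_int sb + fst b"
    by (simp_all add: skey_def sa_def sb_def)
  have kpos: "real k > 0" using k by simp
  consider "sa = sb" | "sa < sb" | "sb < sa" by linarith
  then show ?thesis
  proof cases
    case 1
    have "of_int sa \<le> real k * snd a" "real k * snd a < of_int sa + 1"
      unfolding sa_def by linarith+
    moreover have "of_int sb \<le> real k * snd b" "real k * snd b < of_int sb + 1"
      unfolding sb_def by linarith+
    ultimately have "\<bar>real k * snd a - real k * snd b\<bar> < 1" using 1 by linarith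
    then have "real k * \<bar>snd a - snd b\<bar> < 1" by (simp add: right_diff_distrib[symmetric] abs_mult)
    then have "\<bar>snd a - snd b\<bar> < 1 / real k" using kpos by (simp add: field_simps)
    moreover have "fst a \<le> fst b" using le fa fb 1 by simp
    ultimately show ?thesis using d fa fb 1 by simp
  next
    case 2
    then have "of_int sb \<ge> of_int sa + (1::real)" by simp
    then have "skey k b - skey k a \<ge> 2" using fa fb ua ub by linarith
    moreover have "dist a b \<le> 2" using d ua ub by linarith
    moreover have "1 / real k \<ge> 0" by simp
    ultimately show ?thesis by linarith
  next
    case 3
    then have "of_int sa \<ge> of_int sb + (1::real)" by simp
    then have "skey k a - skey k b \<ge> 2" using fa fb ua ub by linarith
    then show ?thesis using le by linarith
  qed
qed

lemma skey_range:
  assumes "z \<in> unit_square"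
  shows "0 \<le> skey k z \<and> skey k z \<le> 3 * real k + 1"
proof -
  have u: "0 \<le> fst z" "fst z \<le> 1" "0 \<le> snd z" "snd z \<le> 1" using assms by (auto simp: in_unit_square)
  have "0 \<le> real k * snd z" using u by simp
  then have "0 \<le> \<lfloor>real k * snd z\<rfloor>" by simp
  moreover have "real k * snd z \<le> real k" using u by (simp add: mult_left_le)
  then have "of_int \<lfloor>real k * snd z\<rfloor> \<le> real k" by linarith
  ultimately show ?thesis using u by (simp add: skey_def)
qed

lemma tour_length_pos:
  assumes "is_tour X xs"
  shows "0 < tour_length xs"
proof -
  have d: "distinct xs" "length xs \<ge> 3" using assms by (auto simp: is_tour_def)
  then have "xs!0 \<noteq> xs!1" by (subst nth_eq_iff_index_eq) auto
  then have "0 < dist (xs!0) (xs!(Suc 0 mod length xs))" using d by simp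
  also have "\<dots> \<le> tour_length xs"
    unfolding tour_length_def
    by (rule member_le_sum[where f="\<lambda>i. dist (xs!i) (xs!(Suc i mod length xs))"]) (use d in auto)
  finally show ?thesis .
qed

lemma opt_bound:
  assumes X: "finite X" "X \<subseteq> unit_square" "card X \<ge> 3"
  shows "opt_length X \<le> 10 * sqrt (real (card X)) \<and> 0 < opt_length X"
proof -
  define n where "n = card X"
  define k where "k = nat \<lceil>sqrt (real n)\<rceil>"
  have sn: "sqrt (real n) \<ge> 1" using X(3) by (simp add: n_def)
  have k1: "real k \<ge> sqrt (real n)" "real k \<le> sqrt (real n) + 1" unfolding k_def
    using sn by linarith+
  have kge: "k \<ge> 1" using k1 sn by linarith
  obtain zs0 where zs0: "distinct zs0" "set zs0 = X" using finite_distinct_list[OF X(1)] by blast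
  define xs where "xs = sort_key (skey k) zs0"
  have xs: "distinct xs" "set xs = X" using zs0 by (simp_all add: xs_def)
  have lxs: "length xs = n" using xs distinct_card n_def by metis
  have tour: "is_tour X xs" using xs lxs X(3) by (simp add: is_tour_def n_def)
  have srt: "sorted (map (skey k) xs)" by (simp add: xs_def)
  have inX: "xs!i \<in> unit_square" if "i < n" for i using that lxs xs X(2) nth_mem by blast
  define g where "g i = dist (xs!i) (xs!(Suc i mod n))" for i
  have n1: "n = Suc (n - 1)" using X(3) n_def by simp
  have "tour_length xs = (\<Sum>i<n. g i)" by (simp add: tour_length_def g_def lxs)
  also have "\<dots> = (\<Sum>i<n - 1. g i) + g (n - 1)" using n1 by (metis sum.lessThan_Suc)
  also have "(\<Sum>i<n - 1. g i) \<le> (\<Sum>i<n - 1. skey k (xs!Suc i) - skey k (xs!i) + 1 / real k)"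
  proof (rule sum_mono)
    fix i assume "i \<in> {..<n - 1}"
    then have i: "Suc i < n" by simp
    have "skey k (xs!i) \<le> skey k (xs!Suc i)"
      using sorted_nth_mono[OF srt, of i "Suc i"] i lxs by simp
    moreover have u: "xs!i \<in> unit_square" "xs!Suc i \<in> unit_square" using inX i by auto
    ultimately have "dist (xs!i) (xs!Suc i) \<le> skey k (xs!Suc i) - skey k (xs!i) + 1 / real k"
      using edge_bound[OF kge u] by blast
    then show "g i \<le> skey k (xs!Suc i) - skey k (xs!i) + 1 / real k" using i by (simp add: g_def)
  qed
  also have "(\<Sum>i<n - 1. skey k (xs!Suc i) - skey k (xs!i) + 1 / real k)
      = skey k (xs!(n - 1)) - skey k (xs!0) + real (n - 1) / real k"
    by (simp add: sum.distrib sum_lessThan_telescope[where f="\<lambda>i. skey k (xs!i)"])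
  also have "skey k (xs!(n - 1)) - skey k (xs!0) \<le> 3 * real k + 1"
  proof -
    have "n - 1 < n" "0 < n" using n1 by simp_all
    then have "0 \<le> skey k (xs!0)" "skey k (xs!(n - 1)) \<le> 3 * real k + 1"
      using skey_range[OF inX[of "n-1"], of k] skey_range[OF inX[of 0], of k] by auto
    then show ?thesis by linarith
  qed
  also have "real (n - 1) / real k \<le> sqrt (real n)"
  proof -
    have "real (n - 1) \<le> real n" by simp
    also have "real n = sqrt (real n) * sqrt (real n)" by simp
    also have "\<dots> \<le> sqrt (real n) * real k" by (rule mult_left_mono) (use k1 in auto)
    finally show ?thesis using kge by (simp add: field_simps)
  qed
  also have "g (n - 1) \<le> 2"
  proof -
    have "Suc (n-1) mod n < n" "n - 1 < n" using n1 by simp_all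
    then show ?thesis unfolding g_def by (intro dist_le_2 inX)
  qed
  finally have tl: "tour_length xs \<le> 3 * real k + 1 + sqrt (real n) + 2" by simp
  have "opt_length X \<le> tour_length xs"
    unfolding opt_length_def by (rule Min_le) (use finite_tours'[OF X(1)] tour in auto)
  moreover have "3 * real k + 1 + sqrt (real n) + 2 \<le> 10 * sqrt (real n)" using k1 sn by linarith
  moreover have "0 < opt_length X"
    unfolding opt_length_def
    using finite_tours'[OF X(1)] tour tour_length_pos by (subst Min_gr_iff) auto
  ultimately show ?thesis using tl by (simp add: n_def)
qed

abbreviation "Msq \<equiv> uniform_measure lborel unit_square"

lemma lborel_box:
  assumes "a1 \<le> b1" "a2 \<le> b2"
  shows "emeasure lborel (cbox (a1,a2) (b1,b2)) = ennreal ((b1-a1)*(b2-a2))"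
  using assms by (simp add: emeasure_lborel_cbox_eq Basis_prod_def inner_prod_def)

lemma lborel_square: "emeasure lborel unit_square = 1"
  unfolding unit_square_def by (subst lborel_box) auto

lemma unit_square_sets: "unit_square \<in> sets lborel"
  unfolding unit_square_def by simp

lemma prob_Msq: "prob_space Msq"
  by (rule prob_space_uniform_measure) (simp_all add: lborel_square)

lemma emeasure_Msq:
  assumes "A \<in> sets lborel" "A \<subseteq> unit_square"
  shows "emeasure Msq A = emeasure lborel A"
proof -
  have "unit_square \<inter> A = A" using assms by auto
  then show ?thesis using assms unit_square_sets by (simp add: lborel_square divide_ennreal_def)
qed

lemma sets_Msq: "sets Msq = sets lborel" by simp

interpretation Msq_prod: product_sigma_finite "\<lambda>_::nat. Msq"
  unfolding product_sigma_finite_def using prob_Msq prob_space_imp_sigma_finite by blast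


lemma side_neg:
  assumes "fst P < fst Q" "fst P \<le> fst z" "fst z \<le> fst Q"
    "1/3 \<le> snd P" "1/3 \<le> snd Q" "snd z < 1/3"
  shows "side P Q z < 0"
proof -
  define D where "D = fst Q - fst P"
  define t where "t = fst z - fst P"
  have D: "D > 0" "0 \<le> t" "t \<le> D" using assms by (auto simp: D_def t_def)
  have e: "side P Q z = D * snd z - ((D - t) * snd P + t * snd Q)"
    by (simp add: side_def D_def t_def algebra_simps)
  have "(D - t) * snd P \<ge> (D - t) * (1/3)" by (rule mult_left_mono) (use assms D in auto)
  moreover have "t * snd Q \<ge> t * (1/3)" by (rule mult_left_mono) (use assms D in auto)
  moreover have "D * snd z < D * (1/3)" by (rule mult_strict_left_mono) (use assms D in auto)
  moreover have "(D - t) * (1/3) + t * (1/3) = D * (1/3)" by (simp add: field_simps)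
  ultimately show ?thesis unfolding e by linarith
qed

lemma dist_ge_snd: "\<bar>snd a - snd b\<bar> \<le> dist a b"
  using dist_snd_le[of a b] by (simp add: dist_real_def)

definition eps :: "nat \<Rightarrow> real" where "eps n = 1 / (8 * real n)"
definition lo :: "nat \<Rightarrow> nat \<Rightarrow> real" where "lo n k = real k / real n"
definition hi :: "nat \<Rightarrow> nat \<Rightarrow> real" where "hi n k = real k / real n + 1 / (2 * real n)"
definition L1 :: "nat \<Rightarrow> point set" where "L1 n = cbox (0, 1/3) (eps n, 2/3)"
definition R1 :: "nat \<Rightarrow> point set" where "R1 n = cbox (1 - eps n, 1/3) (1, 2/3)"
definition Ls :: "nat \<Rightarrow> point set" where "Ls n = cbox (0, 0) (eps n, 1)"
definition Rs :: "nat \<Rightarrow> point set" where "Rs n = cbox (1 - eps n, 0) (1, 1)"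
definition B1 :: "nat \<Rightarrow> nat \<Rightarrow> point set" where "B1 n k = cbox (lo n k, 0) (hi n k, 1/12)"
definition B2 :: "nat \<Rightarrow> nat \<Rightarrow> point set" where "B2 n k = cbox (lo n k, 1/4) (hi n k, 3/10)"
definition Cr :: "nat \<Rightarrow> nat \<Rightarrow> point set" where
  "Cr n k = unit_square - (Ls n \<union> Rs n \<union> B1 n k \<union> B2 n k)"

definition reg :: "nat \<Rightarrow> nat \<Rightarrow> nat \<times> nat \<times> nat \<times> nat \<Rightarrow> nat \<Rightarrow> point set" where
  "reg n k \<tau> i = (case \<tau> of (a, b, c, d) \<Rightarrow>
     if i = a then L1 n else if i = b then R1 n else if i = c then B1 n k
     else if i = d then B2 n k else Cr n k)"

definition Tup :: "nat \<Rightarrow> (nat \<times> nat \<times> nat \<times> nat) set" where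
  "Tup n = (SIGMA a:{..<n}. SIGMA b:{..<n} - {a}. SIGMA c:{..<n} - {a, b}. {..<n} - {a, b, c})"

definition Bx :: "nat \<Rightarrow> nat \<Rightarrow> nat \<times> nat \<times> nat \<times> nat \<Rightarrow> (nat \<Rightarrow> point) set" where
  "Bx n k \<tau> = Pi\<^sub>E {..<n} (reg n k \<tau>)"

definition Gk :: "nat \<Rightarrow> nat \<Rightarrow> (nat \<Rightarrow> point) set" where
  "Gk n k = (\<Union>\<tau>\<in>Tup n. Bx n k \<tau>)"

lemma mem_cbox2: "(z::point) \<in> cbox (a1, a2) (b1, b2) \<longleftrightarrow> a1 \<le> fst z \<and> fst z \<le> b1 \<and> a2 \<le> snd z \<and> snd z \<le> b2"
  by (cases z) (simp add: cbox_Pair_eq mem_box_real)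

lemma Tup_mem: "(a, b, c, d) \<in> Tup n \<longleftrightarrow> a < n \<and> b < n \<and> c < n \<and> d < n \<and> distinct [a, b, c, d]"
  by (auto simp: Tup_def)

lemma col_facts:
  assumes n: "n \<ge> 8" and k: "1 \<le> k" "k \<le> n - 2"
  shows "eps n < lo n k" "lo n k < hi n k" "hi n k < 1 - eps n" "0 < eps n" "eps n < 1/2"
proof -
  have np: "real n \<ge> 8" using n by simp
  have kk: "1 \<le> real k" "real k \<le> real n - 2" using k n by auto
  show "0 < eps n" using np by (simp add: eps_def)
  show "eps n < 1/2" using np by (simp add: eps_def field_simps)
  show "eps n < lo n k" using np kk by (simp add: eps_def lo_def field_simps)
  show "lo n k < hi n k" using np by (simp add: lo_def hi_def)
  have "hi n k = (real k + 1/2) / real n" using np by (simp add: hi_def field_simps)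
  also have "\<dots> \<le> (real n - 3/2) / real n" using kk np by (simp add: divide_right_mono)
  also have "\<dots> = 1 - 3 / (2 * real n)" using np by (simp add: field_simps)
  also have "\<dots> < 1 - eps n" using np by (simp add: eps_def field_simps)
  finally show "hi n k < 1 - eps n" .
qed

lemma box_facts:
  assumes n: "n \<ge> 8" and k: "1 \<le> k" "k \<le> n - 2"
    and p: "p \<in> Bx n k (a, b, c, d)" and t: "(a, b, c, d) \<in> Tup n"
  shows "\<forall>i<n. p i \<in> unit_square"
    "fst (p a) \<le> eps n" "1/3 \<le> snd (p a)" "snd (p a) \<le> 2/3"
    "fst (p b) \<ge> 1 - eps n" "1/3 \<le> snd (p b)" "snd (p b) \<le> 2/3"
    "\<forall>i<n. i \<noteq> a \<longrightarrow> eps n < fst (p i)"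
    "\<forall>i<n. i \<noteq> b \<longrightarrow> fst (p i) < 1 - eps n"
    "p c \<in> B1 n k" "p d \<in> B2 n k"
    "lo n k \<le> fst (p c)" "fst (p c) \<le> hi n k" "snd (p c) \<le> 1/12"
    "lo n k \<le> fst (p d)" "fst (p d) \<le> hi n k" "1/4 \<le> snd (p d)" "snd (p d) \<le> 3/10"
    "a < n" "b < n" "c < n" "d < n" "distinct [a, b, c, d]"
proof -
  note cf = col_facts[OF n k]
  have td: "a < n" "b < n" "c < n" "d < n" "distinct [a, b, c, d]" using t by (simp_all add: Tup_mem)
  then show "a < n" "b < n" "c < n" "d < n" "distinct [a, b, c, d]" by simp_all
  have pi: "p i \<in> reg n k (a, b, c, d) i" if "i < n" for i
    using p that by (auto simp: Bx_def PiE_iff)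
  have pa: "p a \<in> L1 n" using pi[OF td(1)] by (simp add: reg_def)
  have pb: "p b \<in> R1 n" using pi[OF td(2)] td(5) by (simp add: reg_def)
  show pc: "p c \<in> B1 n k" using pi[OF td(3)] td(5) by (simp add: reg_def)
  show pd: "p d \<in> B2 n k" using pi[OF td(4)] td(5) by (simp add: reg_def)
  show "fst (p a) \<le> eps n" "1/3 \<le> snd (p a)" "snd (p a) \<le> 2/3" using pa by (auto simp: L1_def mem_cbox2)
  show "fst (p b) \<ge> 1 - eps n" "1/3 \<le> snd (p b)" "snd (p b) \<le> 2/3" using pb by (auto simp: R1_def mem_cbox2)
  show "lo n k \<le> fst (p c)" "fst (p c) \<le> hi n k" "snd (p c) \<le> 1/12" using pc by (auto simp: B1_def mem_cbox2)
  show "lo n k \<le> fst (p d)" "fst (p d) \<le> hi n k" "1/4 \<le> snd (p d)" "snd (p d) \<le> 3/10"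
    using pd by (auto simp: B2_def mem_cbox2)
  have regsq: "reg n k (a, b, c, d) i \<subseteq> unit_square" for i
    using cf by (auto simp: reg_def L1_def R1_def B1_def B2_def Cr_def in_unit_square mem_cbox2)
  show "\<forall>i<n. p i \<in> unit_square" using pi regsq by blast
  have xr: "eps n < fst (p i) \<and> fst (p i) < 1 - eps n" if "i < n" "i \<noteq> a" "i \<noteq> b" for i
  proof -
    have "p i \<in> B1 n k \<or> p i \<in> B2 n k \<or> p i \<in> Cr n k" using pi[OF that(1)] that
      by (auto simp: reg_def split: if_splits)
    then show ?thesis
    proof (elim disjE)
      assume "p i \<in> B1 n k" then show ?thesis using cf by (auto simp: B1_def mem_cbox2)
    next
      assume "p i \<in> B2 n k" then show ?thesis using cf by (auto simp: B2_def mem_cbox2)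
    next
      assume "p i \<in> Cr n k"
      then have "p i \<in> unit_square" "p i \<notin> Ls n" "p i \<notin> Rs n" by (auto simp: Cr_def)
      then show ?thesis by (auto simp: in_unit_square Ls_def Rs_def mem_cbox2)
    qed
  qed
  show "\<forall>i<n. i \<noteq> a \<longrightarrow> eps n < fst (p i)"
  proof (intro allI impI)
    fix i assume "i < n" "i \<noteq> a"
    then show "eps n < fst (p i)"
      using xr[of i] \<open>fst (p b) \<ge> 1 - eps n\<close> cf by (cases "i = b") auto
  qed
  show "\<forall>i<n. i \<noteq> b \<longrightarrow> fst (p i) < 1 - eps n"
  proof (intro allI impI)
    fix i assume "i < n" "i \<noteq> b"
    then show "fst (p i) < 1 - eps n"
      using xr[of i] \<open>fst (p a) \<le> eps n\<close> cf by (cases "i = a") auto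
  qed
qed

lemma pointwise_real:
  assumes n: "n \<ge> 8" and Kp: "Kp = {k\<in>{1..n-2}. p \<in> Gk n k}" "Kp \<noteq> {}"
  shows "real (card Kp) / (60 * sqrt (real n)) \<le> worst_xopt_length (p ` {..<n}) / opt_length (p ` {..<n})"
proof -
  define X where "X = p ` {..<n}"
  have Kp1: "k \<in> {1..n-2}" "\<exists>\<tau>. \<tau> \<in> Tup n \<and> p \<in> Bx n k \<tau>" if "k \<in> Kp" for k
    using that Kp(1) by (auto simp: Gk_def)
  obtain k0 where k0: "k0 \<in> Kp" using Kp(2) by auto
  obtain a0 b0 c0 d0 where t0: "(a0,b0,c0,d0) \<in> Tup n" "p \<in> Bx n k0 (a0,b0,c0,d0)"
    using Kp1(2)[OF k0] by auto
  have k0r: "1 \<le> k0" "k0 \<le> n - 2" using Kp1(1)[OF k0] by auto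
  note bf0 = box_facts[OF n k0r t0(2) t0(1)]
  note cf0 = col_facts[OF n k0r]
  define P where "P = p a0"
  define Q where "Q = p b0"
  have finX: "finite X" by (simp add: X_def)
  have PX: "P \<in> X" "Q \<in> X" using bf0 by (auto simp: X_def P_def Q_def)
  have sq: "X \<subseteq> unit_square" using bf0(1) by (auto simp: X_def)
  have lexP: "\<forall>w\<in>X. lexle P w"
  proof
    fix w assume "w \<in> X"
    then obtain i where i: "i < n" "w = p i" by (auto simp: X_def)
    show "lexle P w"
    proof (cases "i = a0")
      case True then show ?thesis using i by (simp add: P_def lexle_refl)
    next
      case False then have "eps n < fst w" using bf0(8) i by auto
      then show ?thesis using bf0(2) by (simp add: lexle_def P_def)
    qed
  qed
  have lexQ: "\<forall>w\<in>X. lexle w Q"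
  proof
    fix w assume "w \<in> X"
    then obtain i where i: "i < n" "w = p i" by (auto simp: X_def)
    show "lexle w Q"
    proof (cases "i = b0")
      case True then show ?thesis using i by (simp add: Q_def lexle_refl)
    next
      case False then have "fst w < 1 - eps n" using bf0(9) i by auto
      then show ?thesis using bf0(5) by (simp add: lexle_def Q_def)
    qed
  qed
  have fPQ: "fst P \<le> eps n" "1 - eps n \<le> fst Q" "1/3 \<le> snd P" "1/3 \<le> snd Q"
    using bf0 by (simp_all add: P_def Q_def)
  have PQ: "P \<noteq> Q" using fPQ cf0 by auto
  have card3: "card X \<ge> 3"
  proof -
    have "p c0 \<in> X" using bf0 by (auto simp: X_def)
    moreover have "fst (p c0) \<noteq> fst P" "fst (p c0) \<noteq> fst Q"
      using bf0(12,13) fPQ cf0 by auto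
    moreover have "p c0 \<noteq> P" "p c0 \<noteq> Q" using calculation(2,3) by auto
    ultimately have "{P, Q, p c0} \<subseteq> X" "card {P, Q, p c0} = 3" using PX PQ by auto
    then show ?thesis using card_mono[OF finX] by metis
  qed
  have cardn: "card X \<le> n" unfolding X_def using card_image_le[of "{..<n}" p] by simp
  define tau where "tau k = (SOME \<tau>. \<tau> \<in> Tup n \<and> p \<in> Bx n k \<tau>)" for k
  have tau: "tau k \<in> Tup n \<and> p \<in> Bx n k (tau k)" if "k \<in> Kp" for k
    unfolding tau_def using Kp1(2)[OF that] by (rule someI_ex)
  define ca where "ca k = p (fst (snd (snd (tau k))))" for k
  define cb where "cb k = p (snd (snd (snd (tau k))))" for k
  have colk: "ca k \<in> X \<and> side P Q (ca k) < 0 \<and> cb k \<in> X \<and> side P Q (cb k) < 0 \<and>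
      lo n k \<le> fst (ca k) \<and> fst (ca k) \<le> hi n k \<and> lo n k \<le> fst (cb k) \<and> fst (cb k) \<le> hi n k \<and>
      1/6 \<le> dist (ca k) (cb k)" if "k \<in> Kp" for k
  proof -
    obtain a b c d where abcd: "tau k = (a, b, c, d)" by (cases "tau k") auto
    have kr: "1 \<le> k" "k \<le> n - 2" using Kp1(1)[OF that] by auto
    have tk: "(a,b,c,d) \<in> Tup n" "p \<in> Bx n k (a,b,c,d)" using tau[OF that] abcd by auto
    note bf = box_facts[OF n kr tk(2) tk(1)]
    note cf = col_facts[OF n kr]
    have ca: "ca k = p c" and cb: "cb k = p d" by (simp_all add: ca_def cb_def abcd)
    have "ca k \<in> X" "cb k \<in> X" using bf by (auto simp: X_def ca cb)
    moreover have "side P Q (ca k) < 0" unfolding ca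
      by (rule side_neg) (use fPQ bf cf in auto)
    moreover have "side P Q (cb k) < 0" unfolding cb
      by (rule side_neg) (use fPQ bf cf in auto)
    moreover have "1/6 \<le> dist (ca k) (cb k)"
      using dist_ge_snd[of "p c" "p d"] bf by (simp add: ca cb)
    ultimately show ?thesis using bf by (simp add: ca cb)
  qed
  have disj: "\<forall>k\<in>Kp. \<forall>k'\<in>Kp. k \<noteq> k' \<longrightarrow> {lo n k..hi n k} \<inter> {lo n k'..hi n k'} = {}"
  proof (intro ballI impI)
    fix k k' assume kk: "k \<in> Kp" "k' \<in> Kp" "k \<noteq> k'"
    have np: "real n > 0" using n by simp
    have sep: "hi n i < lo n j" if "i < j" for i j
    proof -
      have "real i + 1/2 < real j" using that by linarith
      then have "(real i + 1/2) / real n < real j / real n" using np by (simp add: divide_strict_right_mono)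
      then show ?thesis using np by (simp add: hi_def lo_def add_divide_distrib)
    qed
    show "{lo n k..hi n k} \<inter> {lo n k'..hi n k'} = {}"
    proof (cases "k < k'")
      case True then show ?thesis using sep[OF True] by auto
    next
      case False then have "k' < k" using kk by simp
      then show ?thesis using sep[of k' k] by auto
    qed
  qed
  have finKp: "finite Kp" using Kp(1) by simp
  have w: "1/6 * real (card Kp) \<le> worst_xopt_length X"
    by (rule worst_ge[OF finX PX(1,2) PQ lexP lexQ finKp Kp(2), where a=ca and b=cb and lo="lo n" and hi="hi n"])
       (use colk disj in auto)
  have ob: "opt_length X \<le> 10 * sqrt (real (card X))" "0 < opt_length X"
    using opt_bound[OF finX sq card3] by auto
  have "10 * sqrt (real (card X)) \<le> 10 * sqrt (real n)" using cardn by simp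
  then have ob2: "opt_length X \<le> 10 * sqrt (real n)" using ob by linarith
  have "0 \<le> 1/6 * real (card Kp)" by simp
  then have wpos: "0 \<le> worst_xopt_length X" using w by linarith
  have sn: "sqrt (real n) > 0" using n by simp
  have "real (card Kp) / (60 * sqrt (real n)) = (1/6 * real (card Kp)) / (10 * sqrt (real n))" by simp
  also have "\<dots> \<le> worst_xopt_length X / (10 * sqrt (real n))"
    by (rule divide_right_mono[OF w]) (use sn in simp)
  also have "\<dots> \<le> worst_xopt_length X / opt_length X"
    by (rule divide_left_mono[OF ob2 wpos]) (use ob sn in simp)
  finally show ?thesis by (simp add: X_def)
qed

lemma regions_disj:
  assumes n: "n \<ge> 8" and k: "1 \<le> k" "k \<le> n - 2"
  shows "L1 n \<inter> R1 n = {}" "L1 n \<inter> B1 n k = {}" "L1 n \<inter> B2 n k = {}" "L1 n \<inter> Cr n k = {}"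
    "R1 n \<inter> B1 n k = {}" "R1 n \<inter> B2 n k = {}" "R1 n \<inter> Cr n k = {}"
    "B1 n k \<inter> B2 n k = {}" "B1 n k \<inter> Cr n k = {}" "B2 n k \<inter> Cr n k = {}"
  using col_facts[OF n k]
  by (auto simp: L1_def R1_def B1_def B2_def Cr_def Ls_def Rs_def mem_cbox2 in_unit_square)

lemma label:
  assumes n: "n \<ge> 8" and k: "1 \<le> k" "k \<le> n - 2"
    and p: "p \<in> Bx n k (a, b, c, d)" and t: "(a, b, c, d) \<in> Tup n" and i: "i < n"
  shows "(p i \<in> L1 n \<longleftrightarrow> i = a) \<and> (p i \<in> R1 n \<longleftrightarrow> i = b) \<and>
         (p i \<in> B1 n k \<longleftrightarrow> i = c) \<and> (p i \<in> B2 n k \<longleftrightarrow> i = d)"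
proof -
  have pi: "p i \<in> reg n k (a, b, c, d) i" using p i by (auto simp: Bx_def PiE_iff)
  have d: "distinct [a,b,c,d]" using t by (simp add: Tup_mem)
  note D = regions_disj[OF n k]
  show ?thesis
  proof (cases "i = a")
    case True then show ?thesis using pi d D by (auto simp: reg_def)
  next
    case na: False
    show ?thesis
    proof (cases "i = b")
      case True then show ?thesis using pi d D na by (auto simp: reg_def)
    next
      case nb: False
      show ?thesis
      proof (cases "i = c")
        case True then show ?thesis using pi d D na nb by (auto simp: reg_def)
      next
        case nc: False
        show ?thesis
        proof (cases "i = d")
          case True then show ?thesis using pi d D na nb nc by (auto simp: reg_def)
        next
          case False then show ?thesis using pi d D na nb nc by (auto simp: reg_def)
        qed
      qed
    qed
  qed
qed

lemma Bx_disjoint: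
  assumes n: "n \<ge> 8" and k: "1 \<le> k" "k \<le> n - 2"
  shows "disjoint_family_on (Bx n k) (Tup n)"
  unfolding disjoint_family_on_def
proof (intro ballI impI)
  fix t1 t2 assume t: "t1 \<in> Tup n" "t2 \<in> Tup n" "t1 \<noteq> t2"
  obtain a b c d where t1: "t1 = (a,b,c,d)" by (cases t1) auto
  obtain a' b' c' d' where t2: "t2 = (a',b',c',d')" by (cases t2) auto
  show "Bx n k t1 \<inter> Bx n k t2 = {}"
  proof (rule ccontr)
    assume "Bx n k t1 \<inter> Bx n k t2 \<noteq> {}"
    then obtain p where p: "p \<in> Bx n k (a,b,c,d)" "p \<in> Bx n k (a',b',c',d')" using t1 t2 by auto
    have m1: "(a,b,c,d) \<in> Tup n" and m2: "(a',b',c',d') \<in> Tup n" using t t1 t2 by auto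
    have lt: "a < n" "b < n" "c < n" "d < n" using m1 by (auto simp: Tup_mem)
    note l1 = label[OF n k p(1) m1] and l2 = label[OF n k p(2) m2]
    have "a = a'" using l1[OF lt(1)] l2[OF lt(1)] by simp
    moreover have "b = b'" using l1[OF lt(2)] l2[OF lt(2)] by simp
    moreover have "c = c'" using l1[OF lt(3)] l2[OF lt(3)] by simp
    moreover have "d = d'" using l1[OF lt(4)] l2[OF lt(4)] by simp
    ultimately show False using t t1 t2 by simp
  qed
qed

lemma reg_sets: "reg n k \<tau> i \<in> sets Msq"
  by (auto simp: reg_def L1_def R1_def B1_def B2_def Cr_def Ls_def Rs_def unit_square_def split: prod.splits)

lemma Bx_sets: "Bx n k \<tau> \<in> sets (PiM {..<n} (\<lambda>_. Msq))"
  unfolding Bx_def by (rule sets_PiM_I_finite) (use reg_sets in auto)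

lemma measure_Msq_box:
  assumes "0 \<le> a1" "a1 \<le> b1" "b1 \<le> 1" "0 \<le> a2" "a2 \<le> b2" "b2 \<le> 1"
  shows "measure Msq (cbox (a1,a2) (b1,b2)) = (b1-a1)*(b2-a2)"
proof -
  have sub: "cbox (a1,a2) (b1,b2) \<subseteq> unit_square" using assms by (auto simp: mem_cbox2 in_unit_square)
  have "emeasure Msq (cbox (a1,a2) (b1,b2)) = ennreal ((b1-a1)*(b2-a2))"
    using emeasure_Msq[OF _ sub] lborel_box assms by simp
  then show ?thesis using assms by (simp add: measure_def)
qed

lemma measure_regions:
  assumes n: "n \<ge> 8" and k: "1 \<le> k" "k \<le> n - 2"
  shows "measure Msq (L1 n) = 1 / (24 * real n)" "measure Msq (R1 n) = 1 / (24 * real n)"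
    "measure Msq (B1 n k) = 1 / (24 * real n)" "measure Msq (B2 n k) = 1 / (40 * real n)"
    "measure Msq (Cr n k) \<ge> 1 - 1 / (2 * real n)"
proof -
  note cf = col_facts[OF n k]
  have np: "real n \<ge> 8" using n by simp
  have lo0: "0 \<le> lo n k" by (simp add: lo_def)
  have hl: "hi n k - lo n k = 1 / (2 * real n)" by (simp add: hi_def lo_def)
  show "measure Msq (L1 n) = 1 / (24 * real n)"
    unfolding L1_def using cf np by (subst measure_Msq_box) (auto simp: eps_def)
  show "measure Msq (R1 n) = 1 / (24 * real n)"
    unfolding R1_def using cf np by (subst measure_Msq_box) (auto simp: eps_def)
  show mB1: "measure Msq (B1 n k) = 1 / (24 * real n)"
    unfolding B1_def using cf np lo0 hl by (subst measure_Msq_box) auto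
  show mB2: "measure Msq (B2 n k) = 1 / (40 * real n)"
    unfolding B2_def using cf np lo0 hl by (subst measure_Msq_box) auto
  have mLs: "measure Msq (Ls n) = 1 / (8 * real n)"
    unfolding Ls_def using cf np by (subst measure_Msq_box) (auto simp: eps_def)
  have mRs: "measure Msq (Rs n) = 1 / (8 * real n)"
    unfolding Rs_def using cf np by (subst measure_Msq_box) (auto simp: eps_def)
  have mS: "measure Msq unit_square = 1"
    using emeasure_Msq[OF unit_square_sets] lborel_square by (simp add: measure_def)
  interpret Mp: prob_space Msq by (rule prob_Msq)
  define U where "U = Ls n \<union> Rs n \<union> B1 n k \<union> B2 n k"
  have Us: "U \<in> sets Msq" by (simp add: U_def Ls_def Rs_def B1_def B2_def)
  have Usub: "U \<subseteq> unit_square"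
    using cf lo0 by (auto simp: U_def Ls_def Rs_def B1_def B2_def mem_cbox2 in_unit_square)
  have "measure Msq U \<le> measure Msq (Ls n \<union> Rs n \<union> B1 n k) + measure Msq (B2 n k)"
    unfolding U_def by (rule measure_Un_le) (auto simp: Ls_def Rs_def B1_def B2_def)
  also have "\<dots> \<le> measure Msq (Ls n \<union> Rs n) + measure Msq (B1 n k) + measure Msq (B2 n k)"
    using measure_Un_le[of "Ls n \<union> Rs n" Msq "B1 n k"] by (simp add: Ls_def Rs_def B1_def)
  also have "\<dots> \<le> measure Msq (Ls n) + measure Msq (Rs n) + measure Msq (B1 n k) + measure Msq (B2 n k)"
    using measure_Un_le[of "Ls n" Msq "Rs n"] by (simp add: Ls_def Rs_def)
  also have "\<dots> = 1/(8*real n) + 1/(8*real n) + 1/(24*real n) + 1/(40*real n)"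
    using mLs mRs mB1 mB2 by simp
  also have "\<dots> \<le> 1 / (2 * real n)" using np by (simp add: field_simps)
  finally have mU: "measure Msq U \<le> 1 / (2 * real n)" .
  have "measure Msq (Cr n k) = measure Msq (unit_square - U)" by (simp add: Cr_def U_def)
  also have "\<dots> = measure Msq unit_square - measure Msq U"
    by (rule Mp.finite_measure_Diff) (use Us Usub unit_square_sets in auto)
  finally show "measure Msq (Cr n k) \<ge> 1 - 1 / (2 * real n)" using mS mU by linarith
qed

lemma card_Tup: "card (Tup n) = n * (n - 1) * (n - 2) * (n - 3)"
proof -
  have c3: "card ({..<n} - {a, b, c}) = n - 3" if "a < n" "b < n" "c < n" "a \<noteq> b" "a \<noteq> c" "b \<noteq> c" for a b c
    using that by (subst card_Diff_subset) auto
  have c2: "card ({..<n} - {a, b}) = n - 2" if "a < n" "b < n" "a \<noteq> b" for a b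
    using that by (subst card_Diff_subset) auto
  have c1: "card ({..<n} - {a}) = n - 1" if "a < n" for a
    using that by (subst card_Diff_subset) auto
  have "card (Tup n) = (\<Sum>a<n. \<Sum>b\<in>{..<n} - {a}. \<Sum>c\<in>{..<n} - {a, b}. card ({..<n} - {a, b, c}))"
    unfolding Tup_def by (simp add: card_SigmaI)
  also have "\<dots> = (\<Sum>a<n. \<Sum>b\<in>{..<n} - {a}. \<Sum>c\<in>{..<n} - {a, b}. n - 3)"
    by (intro sum.cong refl) (auto simp: c3)
  also have "\<dots> = (\<Sum>a<n. \<Sum>b\<in>{..<n} - {a}. (n - 2) * (n - 3))"
    by (intro sum.cong refl) (auto simp: c2)
  also have "\<dots> = (\<Sum>a<n. (n - 1) * ((n - 2) * (n - 3)))"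
    by (intro sum.cong refl) (auto simp: c1)
  finally show ?thesis by (simp add: mult.assoc)
qed

lemma prod_reg:
  assumes t: "(a, b, c, d) \<in> Tup n"
  shows "(\<Prod>i<n. g (reg n k (a,b,c,d) i)) =
    g (L1 n) * g (R1 n) * g (B1 n k) * g (B2 n k) * g (Cr n k) ^ (n - 4)"
proof -
  have d: "a < n" "b < n" "c < n" "d < n" "distinct [a,b,c,d]" using t by (simp_all add: Tup_mem)
  define f where "f i = g (reg n k (a,b,c,d) i)" for i
  have fa: "f a = g (L1 n)" "f b = g (R1 n)" "f c = g (B1 n k)" "f d = g (B2 n k)"
    using d by (auto simp: f_def reg_def)
  have fo: "f i = g (Cr n k)" if "i \<notin> {a,b,c,d}" for i using that by (auto simp: f_def reg_def)
  have "(\<Prod>i<n. f i) = f a * (\<Prod>i\<in>{..<n} - {a}. f i)"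
    by (rule prod.remove) (use d in auto)
  also have "(\<Prod>i\<in>{..<n} - {a}. f i) = f b * (\<Prod>i\<in>{..<n} - {a} - {b}. f i)"
    by (rule prod.remove) (use d in auto)
  also have "(\<Prod>i\<in>{..<n} - {a} - {b}. f i) = f c * (\<Prod>i\<in>{..<n} - {a} - {b} - {c}. f i)"
    by (rule prod.remove) (use d in auto)
  also have "(\<Prod>i\<in>{..<n} - {a} - {b} - {c}. f i) = f d * (\<Prod>i\<in>{..<n} - {a} - {b} - {c} - {d}. f i)"
    by (rule prod.remove) (use d in auto)
  also have "(\<Prod>i\<in>{..<n} - {a} - {b} - {c} - {d}. f i) = (\<Prod>i\<in>{..<n} - {a} - {b} - {c} - {d}. g (Cr n k))"
    by (rule prod.cong) (auto simp: fo)
  also have "\<dots> = g (Cr n k) ^ (n - 4)"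
  proof -
    have "{..<n} - {a} - {b} - {c} - {d} = {..<n} - {a,b,c,d}" by auto
    moreover have "card ({..<n} - {a,b,c,d}) = n - 4" using d by (subst card_Diff_subset) auto
    ultimately show ?thesis by simp
  qed
  finally show ?thesis using fa by (simp add: f_def mult.assoc)
qed

definition c0 :: real where "c0 = 1 / 8847360"

lemma emeasure_Gk:
  assumes n: "n \<ge> 8" and k: "1 \<le> k" "k \<le> n - 2"
  shows "ennreal c0 \<le> emeasure (random_instance n) (Gk n k)"
proof -
  interpret Mp: prob_space Msq by (rule prob_Msq)
  note mr = measure_regions[OF n k]
  define mC where "mC = measure Msq (Cr n k)"
  define V where "V = (1 / (24 * real n)) * (1 / (24 * real n)) * (1 / (24 * real n)) * (1 / (40 * real n)) * mC ^ (n - 4)"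
  have np: "real n \<ge> 8" using n by simp
  have mC0: "mC \<ge> 0" by (simp add: mC_def)
  have eB: "emeasure (random_instance n) (Bx n k \<tau>) = ennreal V" if "\<tau> \<in> Tup n" for \<tau>
  proof -
    obtain a b c d where t: "\<tau> = (a,b,c,d)" by (cases \<tau>) auto
    have "emeasure (random_instance n) (Bx n k \<tau>) = (\<Prod>i<n. emeasure Msq (reg n k \<tau> i))"
      unfolding random_instance_def Bx_def
      by (rule Msq_prod.emeasure_PiM) (use reg_sets in auto)
    also have "\<dots> = (\<Prod>i<n. ennreal (measure Msq (reg n k \<tau> i)))"
      by (simp add: Mp.emeasure_eq_measure)
    also have "\<dots> = ennreal (\<Prod>i<n. measure Msq (reg n k \<tau> i))"
      by (rule prod_ennreal) simp
    also have "(\<Prod>i<n. measure Msq (reg n k \<tau> i)) = V"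
      unfolding t prod_reg[OF that[unfolded t], of "measure Msq"] V_def mC_def using mr by simp
    finally show ?thesis .
  qed
  have "emeasure (random_instance n) (Gk n k) = (\<Sum>\<tau>\<in>Tup n. emeasure (random_instance n) (Bx n k \<tau>))"
    unfolding Gk_def
    by (rule sum_emeasure[symmetric]) (use Bx_sets Bx_disjoint[OF n k] in \<open>auto simp: random_instance_def Tup_def\<close>)
  also have "\<dots> = (\<Sum>\<tau>\<in>Tup n. ennreal V)" by (rule sum.cong) (auto simp: eB)
  also have "\<dots> = ennreal (real (card (Tup n)) * V)"
    by (simp add: ennreal_of_nat_eq_real_of_nat ennreal_mult')
  finally have eq: "emeasure (random_instance n) (Gk n k) = ennreal (real (card (Tup n)) * V)" .
  have mC1: "mC \<ge> 1 - 1 / (2 * real n)" using mr(5) by (simp add: mC_def)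
  have x0: "0 \<le> 1 - 1 / (2 * real n)" using np by (simp add: field_simps)
  have "mC ^ (n - 4) \<ge> (1 - 1 / (2 * real n)) ^ (n - 4)" by (rule power_mono[OF mC1 x0])
  moreover have "(1 + (- 1 / (2 * real n))) ^ (n - 4) \<ge> 1 + real (n - 4) * (- 1 / (2 * real n))"
    by (rule Bernoulli_inequality) (use np in \<open>simp add: field_simps\<close>)
  moreover have "1 + real (n - 4) * (- 1 / (2 * real n)) \<ge> 1/2"
  proof -
    have "real (n - 4) \<le> real n" by simp
    then have "real (n - 4) / (2 * real n) \<le> real n / (2 * real n)" using np by (simp add: divide_right_mono)
    also have "\<dots> = 1/2" using np by simp
    finally show ?thesis by simp
  qed
  ultimately have mCp: "mC ^ (n - 4) \<ge> 1/2" by simp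
  have cT: "real (card (Tup n)) \<ge> real n ^ 4 / 8"
  proof -
    have h: "real (n - 1) \<ge> real n / 2" "real (n - 2) \<ge> real n / 2" "real (n - 3) \<ge> real n / 2"
      using np n by (simp_all add: of_nat_diff)
    have "real (card (Tup n)) = real n * real (n - 1) * real (n - 2) * real (n - 3)"
      by (simp add: card_Tup)
    also have "\<dots> \<ge> real n * (real n / 2) * (real n / 2) * (real n / 2)"
      using h np by (intro mult_mono) (auto simp: mult_nonneg_nonneg)
    finally show ?thesis by (simp add: power4_eq_xxxx field_simps)
  qed
  have "real (card (Tup n)) * V = real (card (Tup n)) * (1 / (552960 * real n ^ 4)) * mC ^ (n - 4)"
    using np by (simp add: V_def power4_eq_xxxx field_simps)
  also have "\<dots> \<ge> (real n ^ 4 / 8) * (1 / (552960 * real n ^ 4)) * (1/2)"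
    using cT mCp np by (intro mult_mono) auto
  also have "(real n ^ 4 / 8) * (1 / (552960 * real n ^ 4)) * (1/2) = c0"
    using np by (simp add: c0_def field_simps)
  finally have "c0 \<le> real (card (Tup n)) * V" .
  then show ?thesis unfolding eq by (rule ennreal_leI)
qed

lemma Gk_sets: "Gk n k \<in> sets (random_instance n)"
  unfolding Gk_def random_instance_def
  by (rule sets.finite_UN) (auto simp: Tup_def intro: Bx_sets)

lemma pointwise:
  assumes n: "n \<ge> 8"
  shows "(\<Sum>k\<in>{1..n-2}. ennreal (1 / (60 * sqrt (real n))) * indicator (Gk n k) p)
     \<le> ennreal (worst_xopt_length (p ` {..<n}) / opt_length (p ` {..<n}))"
proof -
  define Kp where "Kp = {k\<in>{1..n-2}. p \<in> Gk n k}"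
  have "(\<Sum>k\<in>{1..n-2}. ennreal (1 / (60 * sqrt (real n))) * indicator (Gk n k) p)
      = (\<Sum>k\<in>{1..n-2}. if p \<in> Gk n k then ennreal (1 / (60 * sqrt (real n))) else 0)"
    by (rule sum.cong) (auto simp: indicator_def)
  also have "\<dots> = (\<Sum>k\<in>Kp. ennreal (1 / (60 * sqrt (real n))))"
    unfolding Kp_def by (rule sum.inter_filter[symmetric]) simp
  also have "\<dots> = of_nat (card Kp) * ennreal (1 / (60 * sqrt (real n)))" by simp
  also have "\<dots> = ennreal (real (card Kp) * (1 / (60 * sqrt (real n))))"
    by (subst ennreal_mult) (auto simp: ennreal_of_nat_eq_real_of_nat)
  also have "real (card Kp) * (1 / (60 * sqrt (real n))) = real (card Kp) / (60 * sqrt (real n))" by simp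
  finally have eq: "(\<Sum>k\<in>{1..n-2}. ennreal (1 / (60 * sqrt (real n))) * indicator (Gk n k) p)
      = ennreal (real (card Kp) / (60 * sqrt (real n)))" .
  show ?thesis
  proof (cases "Kp = {}")
    case True then show ?thesis unfolding eq by simp
  next
    case False
    show ?thesis unfolding eq
      by (rule ennreal_leI) (rule pointwise_real[OF n Kp_def False])
  qed
qed

theorem theorem3:
  shows "\<exists>c>0. \<exists>N. \<forall>n\<ge>N.
     (\<integral>\<^sup>+ p. ennreal (worst_xopt_length (p ` {..<n}) / opt_length (p ` {..<n}))
        \<partial>random_instance n) \<ge> ennreal (c * sqrt (real n))"
proof (intro exI[of _ "c0 / 120"] conjI exI[of _ 8] allI impI)
  show "0 < c0 / 120" by (simp add: c0_def)
  fix n :: nat assume n: "8 \<le> n"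
  define \<beta> where "\<beta> = 1 / (60 * sqrt (real n))"
  have np: "real n \<ge> 8" using n by simp
  have sn: "sqrt (real n) > 0" using np by simp
  have "ennreal (c0 / 120 * sqrt (real n)) \<le> ennreal (real (card {1..n-2}) * (\<beta> * c0))"
  proof (rule ennreal_leI)
    have cK: "real (card {1..n-2}) = real n - 2" using n by simp
    have "c0 / 120 * sqrt (real n) = c0 * (real n / 2) / (60 * sqrt (real n))"
      using sn by (simp add: field_simps)
    also have "\<dots> \<le> c0 * (real n - 2) / (60 * sqrt (real n))"
      using np sn by (intro divide_right_mono mult_left_mono) (auto simp: c0_def)
    finally show "c0 / 120 * sqrt (real n) \<le> real (card {1..n-2}) * (\<beta> * c0)"
      unfolding cK \<beta>_def by (simp add: field_simps)
  qed
  also have "\<dots> = of_nat (card {1..n-2}) * ennreal (\<beta> * c0)"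
    by (subst ennreal_mult) (auto simp: ennreal_of_nat_eq_real_of_nat \<beta>_def c0_def)
  also have "\<dots> = of_nat (card {1..n-2}) * (ennreal \<beta> * ennreal c0)"
    by (subst ennreal_mult) (auto simp: \<beta>_def c0_def)
  also have "\<dots> = (\<Sum>k\<in>{1..n-2}. ennreal \<beta> * ennreal c0)"
    by simp
  also have "\<dots> \<le> (\<Sum>k\<in>{1..n-2}. ennreal \<beta> * emeasure (random_instance n) (Gk n k))"
    by (intro sum_mono mult_left_mono emeasure_Gk[OF n]) auto
  also have "\<dots> = (\<Sum>k\<in>{1..n-2}. \<integral>\<^sup>+ p. ennreal \<beta> * indicator (Gk n k) p \<partial>random_instance n)"
    by (intro sum.cong refl nn_integral_cmult_indicator[symmetric] Gk_sets)
  also have "\<dots> = (\<integral>\<^sup>+ p. (\<Sum>k\<in>{1..n-2}. ennreal \<beta> * indicator (Gk n k) p) \<partial>random_instance n)"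
    by (rule nn_integral_sum[symmetric]) (use Gk_sets in auto)
  also have "\<dots> \<le> (\<integral>\<^sup>+ p. ennreal (worst_xopt_length (p ` {..<n}) / opt_length (p ` {..<n})) \<partial>random_instance n)"
    by (rule nn_integral_mono) (use pointwise[OF n] in \<open>simp add: \<beta>_def\<close>)
  finally show "ennreal (c0 / 120 * sqrt (real n))
      \<le> (\<integral>\<^sup>+ p. ennreal (worst_xopt_length (p ` {..<n}) / opt_length (p ` {..<n})) \<partial>random_instance n)" .
qed

end
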